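(* Let $p\ge37$ be a prime, $\kappa>0$ and $\xi=\lfloor\sqrt p\rfloor$. Then any set $\mathcal{S}\subseteq\mathbb{F}_p$ of size $\#\mathcal{S}\ge16p^{2\kappa}$ contains pairwise disjoint subsets $\mathcal{D}_k$, $k=1,\ldots,K$, and $\mathcal{E}_\ell$, $\ell=1,\ldots,L$, such that (i) $\#\mathcal{D}_k,\#\mathcal{E}_\ell\ge0.25p^{-\kappa}(\#\mathcal{S})^{1/2}$ for all $k,\ell$; (ii) each $\mathcal{D}_k$ is a $\sqrt p/3$-spaced set; (iii) each set $\xi\mathcal{E}_\ell=\{\xi a~:~a\in\mathcal{E}_\ell\}$ is a $\sqrt p/3$-spaced set; (iv) $\#\big(\mathcal{S}\setminus(\mathcal{S}_0\cup\mathcal{S}_1)\big)\le2p^{-\kappa}\#\mathcal{S}$, where $\mathcal{S}_0=\bigcup_{k=1}^K\mathcal{D}_k$ and $\mathcal{S}_1=\bigcup_{\ell=1}^L\mathcal{E}_\ell$.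
   Context: For $x\in\mathbb{F}_p$, $|x|$ denotes the minimum of the absolute values of the integers in the residue class of $x$ modulo $p$. A set $\mathcal{D}\subseteq\mathbb{F}_p$ is $\Delta$-spaced if $|d_1-d_2|\ge\Delta$ for any two distinct $d_1,d_2\in\mathcal{D}$. *)

theory Defs
  imports Complex_Main "HOL-Computational_Algebra.Primes"
begin

text \<open>Elements of F_p are represented by their canonical integer representatives
  in {0..<p}.  For x in F_p, |x|_p is the minimal absolute value of an integer
  in the residue class of x modulo p.\<close>

definition absp :: "int \<Rightarrow> int \<Rightarrow> int" where
  "absp p x = min (x mod p) (p - x mod p)"

definition spaced :: "int \<Rightarrow> real \<Rightarrow> int set \<Rightarrow> bool" where
  "spaced p \<Delta> D \<longleftrightarrow> (\<forall>d1\<in>D. \<forall>d2\<in>D. d1 \<noteq> d2 \<longrightarrow> real_of_int (absp p (d1 - d2)) \<ge> \<Delta>)"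

definition dilate :: "int \<Rightarrow> int \<Rightarrow> int set \<Rightarrow> int set" where
  "dilate p c E = (\<lambda>a. (c * a) mod p) ` E"

end

theory Submission
  imports Defs
begin

lemma greedy:
  fixes P Q :: "'a set \<Rightarrow> bool" and c :: real
  assumes "finite T" "c > 0"
  shows "\<exists>(K::nat) (L::nat) (D::nat \<Rightarrow> 'a set) (E::nat \<Rightarrow> 'a set).
     (\<forall>k\<in>{1..K}. D k \<subseteq> T) \<and> (\<forall>l\<in>{1..L}. E l \<subseteq> T) \<and>
     (\<forall>k\<in>{1..K}. \<forall>k'\<in>{1..K}. k \<noteq> k' \<longrightarrow> D k \<inter> D k' = {}) \<and>
     (\<forall>l\<in>{1..L}. \<forall>l'\<in>{1..L}. l \<noteq> l' \<longrightarrow> E l \<inter> E l' = {}) \<and>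
     (\<forall>k\<in>{1..K}. \<forall>l\<in>{1..L}. D k \<inter> E l = {}) \<and>
     (\<forall>k\<in>{1..K}. real (card (D k)) \<ge> c \<and> P (D k)) \<and>
     (\<forall>l\<in>{1..L}. real (card (E l)) \<ge> c \<and> Q (E l)) \<and>
     (\<forall>X. X \<subseteq> T - ((\<Union>k\<in>{1..K}. D k) \<union> (\<Union>l\<in>{1..L}. E l)) \<longrightarrow> (P X \<or> Q X) \<longrightarrow> real (card X) < c)"
  using assms(1)
proof (induction "card T" arbitrary: T rule: less_induct)
  case less
  show ?case
  proof (cases "\<exists>X\<subseteq>T. (P X \<or> Q X) \<and> real (card X) \<ge> c")
    case False
    show ?thesis
      apply (rule exI[of _ 0], rule exI[of _ 0], rule exI[of _ "\<lambda>_. {}"], rule exI[of _ "\<lambda>_. {}"])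
      using False by auto
  next
    case True
    then obtain X where X: "X \<subseteq> T" "P X \<or> Q X" "real (card X) \<ge> c" by blast
    have "X \<noteq> {}" using X(3) assms(2) by auto
    hence "T - X \<subset> T" using X(1) by blast
    hence cl: "card (T - X) < card T" using less.prems by (meson psubset_card_mono)
    have fT: "finite (T - X)" using less.prems by simp
    obtain K L :: nat and D E :: "nat \<Rightarrow> 'a set" where H:
     "(\<forall>k\<in>{1..K}. D k \<subseteq> T - X)" "(\<forall>l\<in>{1..L}. E l \<subseteq> T - X)"
     "(\<forall>k\<in>{1..K}. \<forall>k'\<in>{1..K}. k \<noteq> k' \<longrightarrow> D k \<inter> D k' = {})"
     "(\<forall>l\<in>{1..L}. \<forall>l'\<in>{1..L}. l \<noteq> l' \<longrightarrow> E l \<inter> E l' = {})"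
     "(\<forall>k\<in>{1..K}. \<forall>l\<in>{1..L}. D k \<inter> E l = {})"
     "(\<forall>k\<in>{1..K}. real (card (D k)) \<ge> c \<and> P (D k))"
     "(\<forall>l\<in>{1..L}. real (card (E l)) \<ge> c \<and> Q (E l))"
     "(\<forall>X'. X' \<subseteq> (T - X) - ((\<Union>k\<in>{1..K}. D k) \<union> (\<Union>l\<in>{1..L}. E l)) \<longrightarrow> (P X' \<or> Q X') \<longrightarrow> real (card X') < c)"
      using less.hyps[OF cl fT] by (elim exE conjE) (rule that; assumption)
    show ?thesis
    proof (cases "P X")
      case True
      have U: "(\<Union>k\<in>{1..Suc K}. (D(Suc K := X)) k) = (\<Union>k\<in>{1..K}. D k) \<union> X"
        by (auto simp: atLeastAtMostSuc_conv)
      have R: "T - ((\<Union>k\<in>{1..K}. D k) \<union> X \<union> (\<Union>l\<in>{1..L}. E l)) = (T - X) - ((\<Union>k\<in>{1..K}. D k) \<union> (\<Union>l\<in>{1..L}. E l))"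
        by blast
      show ?thesis
        apply (rule exI[of _ "Suc K"], rule exI[of _ L], rule exI[of _ "D(Suc K := X)"], rule exI[of _ E])
        unfolding U R using H X True
        apply (intro conjI)
        subgoal by (auto simp: atLeastAtMostSuc_conv)
        subgoal by (auto simp: atLeastAtMostSuc_conv)
        subgoal by (auto simp: atLeastAtMostSuc_conv)
        subgoal by (auto simp: atLeastAtMostSuc_conv)
        subgoal by (auto simp: atLeastAtMostSuc_conv)
        subgoal by (auto simp: atLeastAtMostSuc_conv)
        subgoal by (auto simp: atLeastAtMostSuc_conv)
        subgoal by (auto simp: atLeastAtMostSuc_conv)
        done
    next
      case False
      hence QX: "Q X" using X(2) by blast
      have U: "(\<Union>l\<in>{1..Suc L}. (E(Suc L := X)) l) = (\<Union>l\<in>{1..L}. E l) \<union> X"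
        by (auto simp: atLeastAtMostSuc_conv)
      have R: "T - ((\<Union>k\<in>{1..K}. D k) \<union> ((\<Union>l\<in>{1..L}. E l) \<union> X)) = (T - X) - ((\<Union>k\<in>{1..K}. D k) \<union> (\<Union>l\<in>{1..L}. E l))"
        by blast
      show ?thesis
        apply (rule exI[of _ K], rule exI[of _ "Suc L"], rule exI[of _ D], rule exI[of _ "E(Suc L := X)"])
        unfolding U R using H X QX
        apply (intro conjI)
        subgoal by (auto simp: atLeastAtMostSuc_conv)
        subgoal by (auto simp: atLeastAtMostSuc_conv)
        subgoal by (auto simp: atLeastAtMostSuc_conv)
        subgoal by (auto simp: atLeastAtMostSuc_conv)
        subgoal by (auto simp: atLeastAtMostSuc_conv)
        subgoal by (auto simp: atLeastAtMostSuc_conv)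
        subgoal by (auto simp: atLeastAtMostSuc_conv)
        subgoal by (auto simp: atLeastAtMostSuc_conv)
        done
    qed
  qed
qed

lemma absp_cong: "a mod p = b mod p \<Longrightarrow> absp p a = absp p b" by (simp add: absp_def)

lemma absp_nonneg: "(p::int) > 0 \<Longrightarrow> absp p a \<ge> 0"
  unfolding absp_def using pos_mod_bound[of p a] pos_mod_sign[of p a] by linarith

lemma absp_neg: "(p::int) > 0 \<Longrightarrow> absp p (-a) = absp p a"
  unfolding absp_def by (auto simp: zmod_zminus1_eq_if)

lemma absp_sym: "(p::int) > 0 \<Longrightarrow> absp p (a - b) = absp p (b - a)"
  using absp_neg[of p "b - a"] by simp

lemma absp_le_abs: "(p::int) > 0 \<Longrightarrow> absp p a \<le> \<bar>a\<bar>"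
proof -
  assume p: "p > 0"
  show ?thesis
  proof (cases "a \<ge> 0")
    case True
    then have "a mod p \<le> a" using p by (simp add: zmod_le_nonneg_dividend)
    then show ?thesis using True unfolding absp_def by auto
  next
    case False
    have "a div p \<le> -1" using div_neg_pos_less0[of a p] False p by linarith
    hence "p * (a div p) \<le> - p" using p mult_left_mono[of "a div p" "-1" p] by simp
    hence "a mod p \<ge> a + p" using minus_mult_div_eq_mod[of a p] by linarith
    then show ?thesis using False unfolding absp_def by auto
  qed
qed

lemma absp_rep: "(p::int) > 0 \<Longrightarrow> \<exists>r. r mod p = a mod p \<and> \<bar>r\<bar> = absp p a"
proof -
  assume p: "p > 0"
  have b: "0 \<le> a mod p" "a mod p < p" using p by auto
  show ?thesis
  proof (cases "a mod p \<le> p - a mod p")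
    case True
    then show ?thesis using b by (intro exI[of _ "a mod p"]) (auto simp: absp_def)
  next
    case False
    have "(a mod p - p) mod p = a mod p" by (simp add: mod_diff_right_eq[symmetric])
    then show ?thesis using b False by (intro exI[of _ "a mod p - p"]) (auto simp: absp_def)
  qed
qed

lemma absp_tri: "(p::int) > 0 \<Longrightarrow> absp p (a + b) \<le> absp p a + absp p b"
proof -
  assume p: "p > 0"
  obtain r where r: "r mod p = a mod p" "\<bar>r\<bar> = absp p a" using absp_rep[OF p] by blast
  obtain t where t: "t mod p = b mod p" "\<bar>t\<bar> = absp p b" using absp_rep[OF p] by blast
  have "(r + t) mod p = (a + b) mod p" using r t by (metis mod_add_cong)
  hence "absp p (a+b) = absp p (r + t)" by (intro absp_cong) simp
  also have "\<dots> \<le> \<bar>r + t\<bar>" using absp_le_abs[OF p] .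
  also have "\<dots> \<le> absp p a + absp p b" using r t by linarith
  finally show ?thesis .
qed

lemma key:
  fixes p :: nat and e :: int
  assumes "p \<ge> 37" "0 < e" "real_of_int e < 2 * sqrt (real p) / 3"
  shows "real_of_int (absp (int p) (int (nat \<lfloor>sqrt (real p)\<rfloor>) * e)) \<ge> 2 * sqrt (real p) / 3"
proof -
  define r where "r = sqrt (real p)"
  define \<xi> where "\<xi> = int (nat \<lfloor>r\<rfloor>)"
  have r2: "r * r = real p" unfolding r_def by simp
  have r6: "r \<ge> 6" unfolding r_def using assms(1)
    by (intro real_le_rsqrt) simp
  have fl: "real_of_int \<xi> \<le> r" "real_of_int \<xi> > r - 1" unfolding \<xi>_def using r6 by auto
  have e1: "real_of_int e \<ge> 1" using assms(2) by simp
  have pos: "\<xi> * e > 0" using fl r6 assms(2) by (smt (verit) mult_pos_pos of_int_less_iff of_int_0)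
  have "real_of_int (\<xi> * e) \<le> r * real_of_int e"
    using fl assms(2) by (simp add: mult_right_mono)
  also have "\<dots> < r * (2 * r / 3)" using assms(3,1) r6 unfolding r_def by (intro mult_strict_left_mono) auto
  finally have up: "real_of_int (\<xi> * e) < 2 * real p / 3" using r2 by (simp add: algebra_simps)
  have lo: "real_of_int (\<xi> * e) \<ge> real_of_int \<xi>"
    using e1 fl r6 by (simp add: mult_le_cancel_left1)
  have lt: "\<xi> * e < int p" using up by linarith
  have m: "(\<xi> * e) mod int p = \<xi> * e" using pos lt by simp
  have "absp (int p) (\<xi> * e) = min (\<xi> * e) (int p - \<xi> * e)" unfolding absp_def m ..
  moreover have "real_of_int (\<xi> * e) \<ge> 2 * r / 3" using lo fl r6 by linarith
  moreover have "real_of_int (int p - \<xi> * e) \<ge> 2 * r / 3" 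
  proof -
    have "real p \<ge> 6 * r" using r2 r6 mult_right_mono[of 6 r r] by simp
    then show ?thesis using up by simp
  qed
  ultimately show ?thesis unfolding r_def \<xi>_def by (simp add: min_def)
qed


lemma maximal_spaced:
  fixes g :: "int \<Rightarrow> int" and p :: int and s :: real
  assumes "finite R" "p > 0" "s > 0"
  shows "\<exists>A\<subseteq>R. spaced p s (g ` A) \<and> (\<forall>x\<in>R. \<exists>a\<in>A. real_of_int (absp p (g x - g a)) < s)"
proof -
  let ?F = "{A. A \<subseteq> R \<and> spaced p s (g ` A)}"
  have fin: "finite ?F" using assms(1) by simp
  have ne: "{} \<in> ?F" by (simp add: spaced_def)
  define m where "m = Max (card ` ?F)"
  have "m \<in> card ` ?F" unfolding m_def using fin ne by (intro Max_in) auto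
  then obtain A where A: "A \<in> ?F" "card A = m" by auto
  have mx: "\<And>B. B \<in> ?F \<Longrightarrow> card B \<le> card A" using A fin unfolding m_def by simp
  have finA: "finite A" using A(1) assms(1) finite_subset by blast
  have spA: "spaced p s (g ` A)" using A(1) by simp
  show ?thesis
  proof (intro exI[of _ A] conjI ballI)
    show "A \<subseteq> R" using A(1) by simp
    show "spaced p s (g ` A)" by (rule spA)
    fix x assume x: "x \<in> R"
    show "\<exists>a\<in>A. real_of_int (absp p (g x - g a)) < s"
    proof (cases "g x \<in> g ` A")
      case True
      then obtain a where a: "a \<in> A" "g a = g x" by auto
      have "absp p (g x - g a) = 0" using a(2) assms(2) by (simp add: absp_def)
      then show ?thesis using a(1) assms(3) by (intro bexI[of _ a]) simp_all
    next
      case False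
      hence xA: "x \<notin> A" by auto
      hence cg: "card (insert x A) > card A" using finA by simp
      have nF: "insert x A \<notin> ?F"
      proof
        assume "insert x A \<in> ?F"
        then have "card (insert x A) \<le> card A" by (rule mx)
        then show False using cg by simp
      qed
      have "insert x A \<subseteq> R" using A(1) x by simp
      hence "\<not> spaced p s (g ` insert x A)" using nF by simp
      hence "\<not> spaced p s (insert (g x) (g ` A))" by simp
      hence "\<exists>d1\<in>insert (g x) (g ` A). \<exists>d2\<in>insert (g x) (g ` A). d1 \<noteq> d2 \<and> real_of_int (absp p (d1 - d2)) < s"
        unfolding spaced_def by (simp add: not_le)
      then obtain d1 d2 where d: "d1 \<in> insert (g x) (g ` A)" "d2 \<in> insert (g x) (g ` A)" "d1 \<noteq> d2"
          "real_of_int (absp p (d1 - d2)) < s" by blast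
      show ?thesis
      proof (cases "d1 = g x")
        case True
        then have "d2 \<in> g ` A" using d by auto
        then show ?thesis using d True by auto
      next
        case False
        then have d1A: "d1 \<in> g ` A" using d by auto
        show ?thesis
        proof (cases "d2 = g x")
          case True
          then show ?thesis using d d1A absp_sym[OF assms(2), of d1 d2] by auto
        next
          case False
          then have d2A: "d2 \<in> g ` A" using d by auto
          have "real_of_int (absp p (d1-d2)) \<ge> s" using spA d1A d2A d(3) unfolding spaced_def by blast
          then show ?thesis using d(4) by linarith
        qed
      qed
    qed
  qed
qed


theorem lemma2p15:
  fixes p :: nat and \<kappa> :: real and S :: "int set"
  assumes "prime p" and "p \<ge> 37" and "\<kappa> > 0"
    and "S \<subseteq> {0..<int p}"
    and "real (card S) \<ge> 16 * real p powr (2 * \<kappa>)"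
  shows "\<exists>(K::nat) (L::nat) (D::nat \<Rightarrow> int set) (E::nat \<Rightarrow> int set).
     (\<forall>k\<in>{1..K}. D k \<subseteq> S) \<and> (\<forall>l\<in>{1..L}. E l \<subseteq> S) \<and>
     (\<forall>k\<in>{1..K}. \<forall>k'\<in>{1..K}. k \<noteq> k' \<longrightarrow> D k \<inter> D k' = {}) \<and>
     (\<forall>l\<in>{1..L}. \<forall>l'\<in>{1..L}. l \<noteq> l' \<longrightarrow> E l \<inter> E l' = {}) \<and>
     (\<forall>k\<in>{1..K}. \<forall>l\<in>{1..L}. D k \<inter> E l = {}) \<and>
     (\<forall>k\<in>{1..K}. real (card (D k)) \<ge> 0.25 * real p powr (-\<kappa>) * sqrt (real (card S))) \<and>
     (\<forall>l\<in>{1..L}. real (card (E l)) \<ge> 0.25 * real p powr (-\<kappa>) * sqrt (real (card S))) \<and>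
     (\<forall>k\<in>{1..K}. spaced (int p) (sqrt (real p) / 3) (D k)) \<and>
     (\<forall>l\<in>{1..L}. spaced (int p) (sqrt (real p) / 3)
                    (dilate (int p) (int (nat \<lfloor>sqrt (real p)\<rfloor>)) (E l))) \<and>
     real (card (S - ((\<Union>k\<in>{1..K}. D k) \<union> (\<Union>l\<in>{1..L}. E l))))
        \<le> 2 * real p powr (-\<kappa>) * real (card S)"
proof -
  have p0: "int p > 0" using assms(2) by simp
  have finS: "finite S" using assms(4) finite_subset by blast
  define s where "s = sqrt (real p) / 3"
  define c where "c = 0.25 * real p powr (-\<kappa>) * sqrt (real (card S))"
  define \<xi> where "\<xi> = int (nat \<lfloor>sqrt (real p)\<rfloor>)"
  define f where "f = (\<lambda>a. (\<xi> * a) mod int p)"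
  have dil: "\<And>E. dilate (int p) \<xi> E = f ` E" unfolding dilate_def f_def ..
  have "real p powr (2*\<kappa>) > 0" using assms(2) by simp
  hence cardpos: "real (card S) > 0" using assms(5) by linarith
  have c0: "c > 0" unfolding c_def using cardpos assms(2) by simp
  have s0: "s > 0" unfolding s_def using assms(2) by simp
  obtain K L :: nat and D E :: "nat \<Rightarrow> int set" where G:
     "(\<forall>k\<in>{1..K}. D k \<subseteq> S)" "(\<forall>l\<in>{1..L}. E l \<subseteq> S)"
     "(\<forall>k\<in>{1..K}. \<forall>k'\<in>{1..K}. k \<noteq> k' \<longrightarrow> D k \<inter> D k' = {})"
     "(\<forall>l\<in>{1..L}. \<forall>l'\<in>{1..L}. l \<noteq> l' \<longrightarrow> E l \<inter> E l' = {})"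
     "(\<forall>k\<in>{1..K}. \<forall>l\<in>{1..L}. D k \<inter> E l = {})"
     "(\<forall>k\<in>{1..K}. real (card (D k)) \<ge> c \<and> spaced (int p) s (D k))"
     "(\<forall>l\<in>{1..L}. real (card (E l)) \<ge> c \<and> spaced (int p) s (dilate (int p) \<xi> (E l)))"
     "(\<forall>X. X \<subseteq> S - ((\<Union>k\<in>{1..K}. D k) \<union> (\<Union>l\<in>{1..L}. E l)) \<longrightarrow>
         (spaced (int p) s X \<or> spaced (int p) s (dilate (int p) \<xi> X)) \<longrightarrow> real (card X) < c)"
    using greedy[OF finS c0, of "spaced (int p) s" "\<lambda>X. spaced (int p) s (dilate (int p) \<xi> X)"]
    by (elim exE conjE) (rule that; assumption)
  define R where "R = S - ((\<Union>k\<in>{1..K}. D k) \<union> (\<Union>l\<in>{1..L}. E l))"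
  have finR: "finite R" unfolding R_def using finS by simp
  have Rsub: "R \<subseteq> {0..<int p}" unfolding R_def using assms(4) by blast
  obtain A where A: "A \<subseteq> R" "spaced (int p) s ((\<lambda>x. x) ` A)"
      "\<forall>x\<in>R. \<exists>a\<in>A. real_of_int (absp (int p) (x - a)) < s"
    using maximal_spaced[OF finR p0 s0, of "\<lambda>x. x"] by blast
  obtain B where B: "B \<subseteq> R" "spaced (int p) s (f ` B)"
      "\<forall>x\<in>R. \<exists>b\<in>B. real_of_int (absp (int p) (f x - f b)) < s"
    using maximal_spaced[OF finR p0 s0, of f] by blast
  have cA: "real (card A) < c" using G(8) A(1,2) unfolding R_def by simp
  have cB: "real (card B) < c" using G(8) B(1,2) unfolding R_def dil by simp
  define ga where "ga x = (SOME a. a \<in> A \<and> real_of_int (absp (int p) (x - a)) < s)" for x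
  define gb where "gb x = (SOME b. b \<in> B \<and> real_of_int (absp (int p) (f x - f b)) < s)" for x
  have ga: "ga x \<in> A \<and> real_of_int (absp (int p) (x - ga x)) < s" if "x \<in> R" for x
  proof -
    have "\<exists>a. a \<in> A \<and> real_of_int (absp (int p) (x - a)) < s" using A(3) that by (simp add: Bex_def)
    then show ?thesis unfolding ga_def by (rule someI_ex)
  qed
  have gb: "gb x \<in> B \<and> real_of_int (absp (int p) (f x - f (gb x))) < s" if "x \<in> R" for x
  proof -
    have "\<exists>b. b \<in> B \<and> real_of_int (absp (int p) (f x - f b)) < s" using B(3) that by (simp add: Bex_def)
    then show ?thesis unfolding gb_def by (rule someI_ex)
  qed
  have close: "real_of_int (absp (int p) (u - v)) < 2 * s"
    if "real_of_int (absp (int p) (u - w)) < s" "real_of_int (absp (int p) (v - w)) < s" for u v w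
  proof -
    have "absp (int p) (u - v) \<le> absp (int p) (u - w) + absp (int p) (w - v)"
      using absp_tri[OF p0, of "u - w" "w - v"] by simp
    also have "absp (int p) (w - v) = absp (int p) (v - w)" by (rule absp_sym[OF p0])
    finally show ?thesis using that by linarith
  qed
  have fcong: "(f x - f y) mod int p = (\<xi> * ((x - y) mod int p)) mod int p" for x y
  proof -
    have "(f x - f y) mod int p = (\<xi> * x - \<xi> * y) mod int p" unfolding f_def by (rule mod_diff_eq)
    also have "\<dots> = (\<xi> * (x - y)) mod int p" by (simp add: right_diff_distrib)
    also have "\<dots> = (\<xi> * ((x - y) mod int p)) mod int p" by (simp add: mod_mult_right_eq)
    finally show ?thesis .
  qed
  have sep: "x = y" if xy: "x \<in> R" "y \<in> R" and c1: "real_of_int (absp (int p) (x - y)) < 2 * s"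
      and c2: "real_of_int (absp (int p) (f x - f y)) < 2 * s" for x y
  proof (rule ccontr)
    assume ne: "x \<noteq> y"
    define d where "d = (x - y) mod int p"
    have xr: "0 \<le> x" "x < int p" "0 \<le> y" "y < int p" using xy Rsub by auto
    have d0: "d \<noteq> 0"
    proof
      assume "d = 0"
      hence "x mod int p = y mod int p" unfolding d_def by (simp add: mod_eq_dvd_iff mod_eq_0_iff_dvd)
      thus False using xr ne by simp
    qed
    have db0: "0 \<le> d" "d < int p" unfolding d_def using p0 by simp_all
    have db: "0 < d" "d < int p" using db0 d0 by simp_all
    have ad: "absp (int p) (x - y) = min d (int p - d)" unfolding absp_def d_def ..
    show False
    proof (cases "real_of_int d < 2 * sqrt (real p) / 3")
      case True
      have "real_of_int (absp (int p) (\<xi> * d)) \<ge> 2 * sqrt (real p) / 3"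
        unfolding \<xi>_def using key[OF assms(2) db(1) True] .
      moreover have "absp (int p) (f x - f y) = absp (int p) (\<xi> * d)"
        using fcong[of x y] unfolding d_def by (intro absp_cong) simp
      ultimately show False using c2 unfolding s_def by simp
    next
      case False
      have m: "real_of_int (min d (int p - d)) < 2 * sqrt (real p) / 3" using c1 ad unfolding s_def by simp
      have e: "real_of_int (int p - d) < 2 * sqrt (real p) / 3"
      proof (cases "d \<le> int p - d")
        case True
        then have "real_of_int (min d (int p - d)) = real_of_int d" by simp
        then show ?thesis using m False by linarith
      next
        case False
        then have "min d (int p - d) = int p - d" by simp
        then show ?thesis using m by simp
      qed
      have e0: "0 < int p - d" using db by simp
      have "(y - x) mod int p = int p - d" unfolding d_def using d0 d_def
        by (metis minus_diff_eq zmod_zminus1_eq_if)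
      hence "real_of_int (absp (int p) (\<xi> * (int p - d))) \<ge> 2 * sqrt (real p) / 3"
        unfolding \<xi>_def using key[OF assms(2) e0 e] by simp
      moreover have "absp (int p) (f y - f x) = absp (int p) (\<xi> * (int p - d))"
        using fcong[of y x] \<open>(y - x) mod int p = int p - d\<close> by (intro absp_cong) simp
      moreover have "absp (int p) (f y - f x) = absp (int p) (f x - f y)" by (rule absp_sym[OF p0])
      ultimately show False using c2 unfolding s_def by simp
    qed
  qed
  have inj: "inj_on (\<lambda>x. (ga x, gb x)) R"
  proof (rule inj_onI)
    fix x y assume x: "x \<in> R" and y: "y \<in> R" and eq: "(ga x, gb x) = (ga y, gb y)"
    have "real_of_int (absp (int p) (x - y)) < 2 * s"
      using close[of x "ga x" y] ga[OF x] ga[OF y] eq by simp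
    moreover have "real_of_int (absp (int p) (f x - f y)) < 2 * s"
      using close[of "f x" "f (gb x)" "f y"] gb[OF x] gb[OF y] eq by simp
    ultimately show "x = y" using sep x y by blast
  qed
  have "(\<lambda>x. (ga x, gb x)) ` R \<subseteq> A \<times> B" using ga gb by auto
  moreover have "finite (A \<times> B)" using A(1) B(1) finR finite_subset by blast
  ultimately have "card R \<le> card (A \<times> B)" using inj card_inj_on_le by blast
  hence "card R \<le> card A * card B" by (simp add: card_cartesian_product)
  hence "real (card R) \<le> real (card A * card B)" by (simp only: of_nat_le_iff)
  hence "real (card R) \<le> real (card A) * real (card B)" by simp
  also have "\<dots> \<le> c * c" using cA cB by (intro mult_mono) auto
  also have "c * c = 1/16 * (real p powr (-\<kappa>) * real p powr (-\<kappa>)) * real (card S)"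
    unfolding c_def by (simp add: algebra_simps)
  also have "real p powr (-\<kappa>) * real p powr (-\<kappa>) = real p powr (-2*\<kappa>)"
    by (simp add: powr_add[symmetric])
  also have "1/16 * real p powr (-2*\<kappa>) * real (card S) \<le> 2 * real p powr (-\<kappa>) * real (card S)"
  proof -
    have "real p powr (-2*\<kappa>) \<le> real p powr (-\<kappa>)" using assms(2,3) by (intro powr_mono) auto
    moreover have "real p powr (-\<kappa>) \<ge> 0" by simp
    ultimately have "1/16 * real p powr (-2*\<kappa>) \<le> 2 * real p powr (-\<kappa>)" by linarith
    then show ?thesis using cardpos by (intro mult_right_mono) auto
  qed
  finally have fin: "real (card R) \<le> 2 * real p powr (-\<kappa>) * real (card S)" .
  show ?thesis
    apply (rule exI[of _ K], rule exI[of _ L], rule exI[of _ D], rule exI[of _ E])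
    using G fin unfolding R_def c_def s_def \<xi>_def by auto
qed

end
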